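(* Let $p\in\Delta_d$ and let $\pi$ be a permutation of $[d]$ with $p_{(i)}:=p_{\pi(i)}$ non-increasing in $i$, and suppose $\tfrac12< p_{(1)}<\tfrac56$. Fix $h\in\{2,\dots,d\}$ with $p_{(h)}>0$ and define the $(h-1)$-parameter sub-model: for $\theta=(\theta_2,\dots,\theta_h)$, let $P_\theta$ be the distribution on $[d]$ with $P_\theta(\pi(i))=\theta_i$ for $2\le i\le h$, $P_\theta(\pi(1))=\theta_1:=1-\sum_{i=2}^h\theta_i-\sum_{i=h+1}^d p_{(i)}$, and $P_\theta(\pi(i))=p_{(i)}$ for $i>h$. Let $\theta(p)=(p_{(2)},\dots,p_{(h)})$, let $0<B\le p_{(h)}/3$ and $\mathcal{N}_{B,h}(p)=\theta(p)+[-B,B]^{h-1}$. Then $P_{\theta'}$ is a valid distribution for all $\theta'\in\mathcal{N}_{B,h}(p)$, and for every channel $W$ from $[d]$ to a finite alphabet $\mathcal{Y}$ with $|\mathcal{Y}|\le 2^b$ and every $\theta'\in\mathcal{N}_{B,h}(p)$, $$\operatorname{Tr}\left(I_W(\theta')\right)\le 2^b\left(6h+\frac{3}{2p_{(h)}}\right)+\frac{3h}{2p_{(h)}},$$ where $I_W(\theta')$ is the Fisher information matrix (with respect to $(\theta_2,\dots,\theta_h)$) of $Y\sim W(\cdot\mid X)$, $X\sim P_{\theta'}$.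
   Context: $\Delta_d$ denotes the probability simplex in $\mathbb{R}^d$. The Fisher information matrix of $Y$ is $[I_W(\theta)]_{jk}=\sum_{y}\frac{\partial_{\theta_j}P^Y_\theta(y)\,\partial_{\theta_k}P^Y_\theta(y)}{P^Y_\theta(y)}$ where $P^Y_\theta(y)=\sum_x W(y\mid x)P_\theta(x)$. *)

theory Defs
  imports "HOL-Analysis.Analysis"
begin

definition in_simplex :: "nat \<Rightarrow> (nat \<Rightarrow> real) \<Rightarrow> bool" where
  "in_simplex d p \<longleftrightarrow> (\<forall>i\<in>{1..d}. 0 \<le> p i) \<and> (\<Sum>i=1..d. p i) = 1"

text \<open>The (h-1)-parameter sub-model P_theta; theta is read only at indices 2..h.\<close>
definition sub_model ::
  "nat \<Rightarrow> (nat \<Rightarrow> real) \<Rightarrow> (nat \<Rightarrow> nat) \<Rightarrow> nat \<Rightarrow> (nat \<Rightarrow> real) \<Rightarrow> nat \<Rightarrow> real" where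
  "sub_model d p \<pi> h \<theta> x =
     (let i = inv_into {1..d} \<pi> x in
      if i = 1 then 1 - (\<Sum>k=2..h. \<theta> k) - (\<Sum>k=h+1..d. p (\<pi> k))
      else if i \<le> h then \<theta> i else p (\<pi> i))"

definition out_dist :: "nat \<Rightarrow> ('y \<Rightarrow> nat \<Rightarrow> real) \<Rightarrow> (nat \<Rightarrow> real) \<Rightarrow> 'y \<Rightarrow> real" where
  "out_dist d W P y = (\<Sum>x=1..d. W y x * P x)"

definition is_channel :: "nat \<Rightarrow> 'y set \<Rightarrow> ('y \<Rightarrow> nat \<Rightarrow> real) \<Rightarrow> bool" where
  "is_channel d Y W \<longleftrightarrow> finite Y \<and>
     (\<forall>x\<in>{1..d}. (\<forall>y\<in>Y. 0 \<le> W y x) \<and> (\<Sum>y\<in>Y. W y x) = 1)"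

definition partial_deriv :: "nat \<Rightarrow> ((nat \<Rightarrow> real) \<Rightarrow> real) \<Rightarrow> (nat \<Rightarrow> real) \<Rightarrow> real" where
  "partial_deriv j F \<theta> = deriv (\<lambda>t. F (\<theta>(j := t))) (\<theta> j)"

definition fisher_trace ::
  "nat \<Rightarrow> (nat \<Rightarrow> real) \<Rightarrow> (nat \<Rightarrow> nat) \<Rightarrow> nat \<Rightarrow> 'y set \<Rightarrow> ('y \<Rightarrow> nat \<Rightarrow> real)
    \<Rightarrow> (nat \<Rightarrow> real) \<Rightarrow> real" where
  "fisher_trace d p \<pi> h Y W \<theta> =
     (\<Sum>j=2..h. \<Sum>y\<in>Y.
        (partial_deriv j (\<lambda>t. out_dist d W (sub_model d p \<pi> h t) y) \<theta>)\<^sup>2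
        / out_dist d W (sub_model d p \<pi> h \<theta>) y)"

end

theory Submission imports Defs begin


lemma reidx: assumes "\<pi> permutes {1..d}" shows "(\<Sum>x=1..d. f x) = (\<Sum>i=1..d. f (\<pi> i))"
  using comm_monoid_add_class.sum.permute[OF assms, of f] by simp

lemma inv_pi: assumes "\<pi> permutes {1..(d::nat)}" "i \<in> {1..d}" shows "inv_into {1..d} \<pi> (\<pi> i) = i"
  using assms by (simp add: permutes_inj_on inv_into_f_f)

lemma sum_upd: assumes "j \<in> {2..(h::nat)}"
  shows "(\<Sum>k=2..h. if k = j then t else \<theta> k) = (\<Sum>k=2..h. \<theta> k) - \<theta> j + (t::real)"
proof -
  have "(\<Sum>k=2..h. if k = j then t else \<theta> k) = (\<Sum>k=2..h. \<theta> k + (if k = j then t - \<theta> k else 0))"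
    by (rule sum.cong) auto
  also have "\<dots> = (\<Sum>k=2..h. \<theta> k) + (\<Sum>k=2..h. (if k = j then t - \<theta> k else 0))"
    by (rule sum.distrib)
  also have "(\<Sum>k=2..h. (if k = j then t - \<theta> k else 0)) = t - \<theta> j"
    using assms by (simp add: sum.delta')
  finally show ?thesis by simp
qed

lemma sub_upd: assumes "j \<in> {2..(h::nat)}"
  shows "sub_model d p \<pi> h (\<theta>(j:=t)) x = sub_model d p \<pi> h \<theta> x +
    (t - \<theta> j) * ((if inv_into {1..d} \<pi> x = j then 1 else 0) - (if inv_into {1..d} \<pi> x = 1 then 1 else 0))"
  using assms unfolding sub_model_def Let_def by (auto simp: sum_upd)

lemma out_upd: assumes "j \<in> {2..(h::nat)}"
  shows "out_dist d W (sub_model d p \<pi> h (\<theta>(j:=t))) y = out_dist d W (sub_model d p \<pi> h \<theta>) y +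
    (t - \<theta> j) * (\<Sum>x=1..d. W y x * ((if inv_into {1..d} \<pi> x = j then 1 else 0) - (if inv_into {1..d} \<pi> x = 1 then 1 else 0)))"
  unfolding out_dist_def sub_upd[OF assms] by (simp only: distrib_left sum.distrib) (simp add: sum_distrib_left mult.left_commute)

lemma deriv_affine: "deriv (\<lambda>t. c + (t - a) * (D::real)) a = D"
proof -
  have "((\<lambda>t. c + (t - a) * D) has_real_derivative D) (at a)"
    by (auto intro!: derivative_eq_intros)
  then show ?thesis by (rule DERIV_imp_deriv)
qed

lemma pd: assumes "j \<in> {2..(h::nat)}" "\<pi> permutes {1..d}" "h \<le> d"
  shows "partial_deriv j (\<lambda>t. out_dist d W (sub_model d p \<pi> h t) y) \<theta> = W y (\<pi> j) - W y (\<pi> 1)"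
proof -
  have "partial_deriv j (\<lambda>t. out_dist d W (sub_model d p \<pi> h t) y) \<theta> =
    (\<Sum>x=1..d. W y x * ((if inv_into {1..d} \<pi> x = j then 1 else 0) - (if inv_into {1..d} \<pi> x = 1 then 1 else 0)))"
    unfolding partial_deriv_def out_upd[OF assms(1)] by (rule deriv_affine)
  also have "\<dots> = (\<Sum>i=1..d. W y (\<pi> i) * ((if inv_into {1..d} \<pi> (\<pi> i) = j then 1 else 0) - (if inv_into {1..d} \<pi> (\<pi> i) = 1 then 1 else 0)))"
    by (rule reidx[OF assms(2)])
  also have "\<dots> = (\<Sum>i=1..d. W y (\<pi> i) * ((if i = j then 1 else 0) - (if i = 1 then 1 else 0)))"
  proof (rule sum.cong)
    fix x assume "x \<in> {1..d}"
    then have "inv_into {1..d} \<pi> (\<pi> x) = x" by (rule inv_pi[OF assms(2)])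
    then show "W y (\<pi> x) * ((if inv_into {1..d} \<pi> (\<pi> x) = j then 1 else 0) - (if inv_into {1..d} \<pi> (\<pi> x) = 1 then 1 else 0))
      = W y (\<pi> x) * ((if x = j then 1 else 0) - (if x = 1 then 1 else 0))" by simp
  qed simp
  also have "\<dots> = (\<Sum>i=1..d. (if i = j then W y (\<pi> i) else 0) - (if i = 1 then W y (\<pi> i) else 0))"
    by (rule sum.cong) auto
  also have "\<dots> = (\<Sum>i=1..d. (if i = j then W y (\<pi> i) else 0)) - (\<Sum>i=1..d. (if i = 1 then W y (\<pi> i) else 0))"
    by (rule sum_subtractf)
  also have "\<dots> = W y (\<pi> j) - W y (\<pi> 1)" using assms by simp
  finally show ?thesis .
qed


lemma split3: assumes "2 \<le> h" "h \<le> (d::nat)"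
  shows "(\<Sum>i=1..d. f i) = f 1 + (\<Sum>i=2..h. f i) + (\<Sum>i=h+1..d. (f i::real))"
proof -
  have "{1..d} = {1} \<union> ({2..h} \<union> {h+1..d})" using assms by auto
  have A: "sum f ({2..h} \<union> {h+1..d}) = sum f {2..h} + sum f {h+1..d}"
    by (rule sum.union_disjoint) auto
  have B: "sum f (insert 1 ({2..h} \<union> {h+1..d})) = f 1 + sum f ({2..h} \<union> {h+1..d})"
    using assms by (intro sum.insert) auto
  have "(\<Sum>i=1..d. f i) = f 1 + ((\<Sum>i=2..h. f i) + (\<Sum>i=h+1..d. f i))"
    using A B \<open>{1..d} = _\<close> by simp
  then show ?thesis by simp
qed

lemma term_bd: assumes "0 \<le> (a::real)" "0 \<le> c" "0 < tj" "0 < t1" "P \<ge> tj * a + t1 * c"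
  shows "(a - c)\<^sup>2 / P \<le> a / tj + c / t1"
proof (cases "P = 0")
  case True then show ?thesis using assms by simp
next
  case False
  have "tj * a \<ge> 0" "t1 * c \<ge> 0" using assms by simp_all
  then have P: "P > 0" using assms False by linarith
  have "(a/tj + c/t1) * P \<ge> (a/tj + c/t1) * (tj * a + t1 * c)"
    using assms by (intro mult_left_mono) auto
  moreover have "(a/tj + c/t1) * (tj * a + t1 * c) = a\<^sup>2 + c\<^sup>2 + a*c*(t1/tj + tj/t1)"
    using assms by (simp add: field_simps power2_eq_square)
  moreover have "a*c*(t1/tj + tj/t1) \<ge> 0" using assms by simp
  moreover have "(a-c)\<^sup>2 = a\<^sup>2 + c\<^sup>2 - 2*a*c" by (simp add: power2_diff)
  moreover have "a*c \<ge> 0" using assms by simp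
  ultimately have "(a-c)\<^sup>2 \<le> (a/tj + c/t1) * P" by linarith
  then show ?thesis using P by (simp add: divide_le_eq)
qed

theorem mainTheorem8:
  fixes d h b :: nat and p :: "nat \<Rightarrow> real" and \<pi> :: "nat \<Rightarrow> nat" and B :: real
    and Y :: "'y set" and W :: "'y \<Rightarrow> nat \<Rightarrow> real"
  assumes "in_simplex d p"
    and "\<pi> permutes {1..d}"
    and "\<forall>i j. 1 \<le> i \<and> i \<le> j \<and> j \<le> d \<longrightarrow> p (\<pi> j) \<le> p (\<pi> i)"
    and "1/2 < p (\<pi> 1)" and "p (\<pi> 1) < 5/6"
    and "2 \<le> h" and "h \<le> d" and "0 < p (\<pi> h)"
    and "0 < B" and "B \<le> p (\<pi> h) / 3"
    and "is_channel d Y W" and "real (card Y) \<le> 2 ^ b"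
  shows "\<forall>\<theta>'. (\<forall>i\<in>{2..h}. \<bar>\<theta>' i - p (\<pi> i)\<bar> \<le> B) \<longrightarrow>
           in_simplex d (sub_model d p \<pi> h \<theta>') \<and>
           fisher_trace d p \<pi> h Y W \<theta>'
             \<le> 2 ^ b * (6 * real h + 3 / (2 * p (\<pi> h))) + 3 * real h / (2 * p (\<pi> h))"
proof (intro allI impI)
  fix \<theta> assume h\<theta>: "\<forall>i\<in>{2..h}. \<bar>\<theta> i - p (\<pi> i)\<bar> \<le> B"
  note perm = assms(2)
  define q where "q i = p (\<pi> i)" for i
  define P where "P = sub_model d p \<pi> h \<theta>"
  define th1 where "th1 = 1 - (\<Sum>k=2..h. \<theta> k) - (\<Sum>k=h+1..d. q k)"
  have pimg: "\<pi> i \<in> {1..d}" if "i \<in> {1..d}" for i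
    using perm that by (metis permutes_in_image)
  have qnn: "0 \<le> q i" if "i \<in> {1..d}" for i
    using assms(1) pimg[OF that] unfolding in_simplex_def q_def by blast
  have qsum: "(\<Sum>i=1..d. q i) = 1"
    using assms(1) reidx[OF perm, of p] unfolding in_simplex_def q_def by simp
  have qge: "q h \<le> q i" if "i \<in> {2..h}" for i
    using assms(3) assms(7) that unfolding q_def by auto
  have Pv: "P (\<pi> i) = (if i = 1 then th1 else if i \<le> h then \<theta> i else q i)" if "i \<in> {1..d}" for i
    unfolding P_def sub_model_def Let_def inv_pi[OF perm that] th1_def q_def by simp
  have thj: "\<theta> i \<ge> 2 * q h / 3" if "i \<in> {2..h}" for i
    using h\<theta> that qge[OF that] assms(10) unfolding q_def by force
  have qh: "q h > 0" using assms(8) q_def by simp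
  have th1e: "th1 = q 1 + (\<Sum>i=2..h. q i - \<theta> i)"
    using qsum split3[OF assms(6,7), of q] unfolding th1_def by (simp add: sum_subtractf)
  have s1: "(\<Sum>i=2..h. q i - \<theta> i) \<ge> (\<Sum>i=2..h. - B)"
    by (rule sum_mono) (use h\<theta> q_def in force)
  have s2: "(\<Sum>i=2..h. q i) \<ge> (\<Sum>i=2..h. 3 * B)"
    by (rule sum_mono) (use qge assms(10) q_def in force)
  have s3: "(\<Sum>i=h+1..d. q i) \<ge> 0" by (rule sum_nonneg) (use qnn assms(6) in auto)
  have s4: "(\<Sum>i=2..h. q i) \<le> 1 - q 1" using qsum split3[OF assms(6,7), of q] s3 by linarith
  have th1gt: "th1 > 1/3" using th1e s1 s2 s4 assms(4) q_def by simp
  have thnn: "0 \<le> \<theta> i" if "i \<in> {2..h}" for i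
    using thj[OF that] qh by linarith
  have Pnn: "0 \<le> P (\<pi> i)" if "i \<in> {1..d}" for i
    using Pv[OF that] th1gt thnn qnn[OF that] that by auto
  have simp: "in_simplex d P"
    unfolding in_simplex_def
  proof
    show "\<forall>x\<in>{1..d}. 0 \<le> P x"
    proof
      fix x assume x: "x \<in> {1..d}"
      then obtain i where "i \<in> {1..d}" "x = \<pi> i" using permutes_image[OF perm] by blast
      then show "0 \<le> P x" using Pnn by simp
    qed
    have "(\<Sum>x=1..d. P x) = (\<Sum>i=1..d. P (\<pi> i))" by (rule reidx[OF perm])
    also have "\<dots> = P (\<pi> 1) + (\<Sum>i=2..h. P (\<pi> i)) + (\<Sum>i=h+1..d. P (\<pi> i))"
      by (rule split3[OF assms(6,7)])
    also have "\<dots> = th1 + (\<Sum>i=2..h. \<theta> i) + (\<Sum>i=h+1..d. q i)"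
    proof -
      have "(\<Sum>i=2..h. P (\<pi> i)) = (\<Sum>i=2..h. \<theta> i)"
      proof (rule sum.cong)
        fix i assume i: "i \<in> {2..h}"
        then have "i \<in> {1..d}" "i \<noteq> 1" "i \<le> h" using assms(7) by auto
        then show "P (\<pi> i) = \<theta> i" using Pv[of i] by simp
      qed simp
      moreover have "(\<Sum>i=h+1..d. P (\<pi> i)) = (\<Sum>i=h+1..d. q i)"
      proof (rule sum.cong)
        fix i assume i: "i \<in> {h+1..d}"
        then have "i \<in> {1..d}" "i \<noteq> 1" "\<not> i \<le> h" using assms(6) by auto
        then show "P (\<pi> i) = q i" using Pv[of i] by simp
      qed simp
      moreover have "P (\<pi> 1) = th1" using Pv[of 1] assms(6,7) by simp
      ultimately show ?thesis by simp
    qed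
    also have "\<dots> = 1" unfolding th1_def by simp
    finally show "(\<Sum>x=1..d. P x) = 1" .
  qed
  show "in_simplex d (sub_model d p \<pi> h \<theta>) \<and> fisher_trace d p \<pi> h Y W \<theta>
             \<le> 2 ^ b * (6 * real h + 3 / (2 * p (\<pi> h))) + 3 * real h / (2 * p (\<pi> h))"
  proof
    show "in_simplex d (sub_model d p \<pi> h \<theta>)" using simp P_def by simp
  next
    have Wnn: "0 \<le> W y x" if "y \<in> Y" "x \<in> {1..d}" for y x
      using assms(11) that unfolding is_channel_def by blast
    have Wsum: "(\<Sum>y\<in>Y. W y x) = 1" if "x \<in> {1..d}" for x
      using assms(11) that unfolding is_channel_def by blast
    have finY: "finite Y" using assms(11) unfolding is_channel_def by blast
    have j1: "1 \<in> {1..d}" using assms(6,7) by auto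
    have PY: "out_dist d W P y \<ge> \<theta> j * W y (\<pi> j) + th1 * W y (\<pi> 1)"
      if y: "y \<in> Y" and j: "j \<in> {2..h}" for y j
    proof -
      have fnn: "0 \<le> W y (\<pi> i) * P (\<pi> i)" if "i \<in> {1..d}" for i
        using Wnn[OF y pimg[OF that]] Pnn[OF that] by simp
      have "out_dist d W P y = (\<Sum>i=1..d. W y (\<pi> i) * P (\<pi> i))"
        unfolding out_dist_def by (rule reidx[OF perm])
      also have "\<dots> = W y (\<pi> 1) * P (\<pi> 1) + (\<Sum>i=2..h. W y (\<pi> i) * P (\<pi> i)) + (\<Sum>i=h+1..d. W y (\<pi> i) * P (\<pi> i))"
        by (rule split3[OF assms(6,7)])
      finally have e: "out_dist d W P y = \<dots>" .
      have a: "(\<Sum>i=h+1..d. W y (\<pi> i) * P (\<pi> i)) \<ge> 0"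
        by (rule sum_nonneg) (use fnn assms(6) in auto)
      have b: "(\<Sum>i=2..h. W y (\<pi> i) * P (\<pi> i)) \<ge> W y (\<pi> j) * P (\<pi> j)"
        by (rule member_le_sum) (use fnn j assms(7) in auto)
      have c: "P (\<pi> j) = \<theta> j" "P (\<pi> 1) = th1" using Pv j j1 assms(7) by auto
      show ?thesis using e a b c by (simp add: mult.commute)
    qed
    have perj: "(\<Sum>y\<in>Y. (W y (\<pi> j) - W y (\<pi> 1))\<^sup>2 / out_dist d W P y) \<le> 3 / (2 * q h) + 3"
      if j: "j \<in> {2..h}" for j
    proof -
      have jd: "j \<in> {1..d}" using j assms(7) by auto
      have tj: "\<theta> j > 0" using thj[OF j] qh by linarith
      have "(\<Sum>y\<in>Y. (W y (\<pi> j) - W y (\<pi> 1))\<^sup>2 / out_dist d W P y)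
          \<le> (\<Sum>y\<in>Y. W y (\<pi> j) / \<theta> j + W y (\<pi> 1) / th1)"
        by (rule sum_mono, rule term_bd) (use Wnn pimg jd j1 tj th1gt PY j in \<open>auto simp: mult.commute\<close>)
      also have "\<dots> = 1 / \<theta> j + 1 / th1"
        using Wsum[OF pimg[OF jd]] Wsum[OF pimg[OF j1]]
        by (simp add: sum.distrib sum_divide_distrib[symmetric])
      also have "\<dots> \<le> 3 / (2 * q h) + 3"
      proof -
        have "1 / \<theta> j \<le> 1 / (2 * q h / 3)"
          using thj[OF j] qh by (intro divide_left_mono) auto
        moreover have "1 / th1 \<le> 3" using th1gt by (simp add: divide_le_eq)
        ultimately show ?thesis by simp
      qed
      finally show ?thesis .
    qed
    have "fisher_trace d p \<pi> h Y W \<theta> = (\<Sum>j=2..h. \<Sum>y\<in>Y. (W y (\<pi> j) - W y (\<pi> 1))\<^sup>2 / out_dist d W P y)"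
      unfolding fisher_trace_def P_def
      by (intro sum.cong refl) (simp only: pd[OF _ perm assms(7)])
    also have "\<dots> \<le> (\<Sum>j=2..h. 3 / (2 * q h) + 3)" by (rule sum_mono) (rule perj)
    also have "\<dots> = real (h - 1) * (3 / (2 * q h) + 3)" by simp
    also have "\<dots> \<le> 2 ^ b * (6 * real h + 3 / (2 * p (\<pi> h))) + 3 * real h / (2 * p (\<pi> h))"
    proof -
      define u where "u = 3 / (2 * q h)"
      have u: "u > 0" using qh u_def by simp
      have bb: "(2::real) ^ b \<ge> 1" by simp
      have "real (h - 1) * (u + 3) \<le> real h * u + 3 * real h"
        using u assms(6) by (simp add: of_nat_diff algebra_simps)
      also have "\<dots> \<le> 2 ^ b * (6 * real h + u) + real h * u"
      proof -
        have "1 * (6 * real h + u) \<le> 2 ^ b * (6 * real h + u)"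
          by (rule mult_right_mono[OF bb]) (use u in simp)
        then have A: "6 * real h + u \<le> 2 ^ b * (6 * real h + u)" by simp
        moreover have "real h \<ge> 0" by simp
        ultimately show ?thesis using u A by linarith
      qed
      finally show ?thesis unfolding u_def q_def by (simp add: mult.commute)
    qed
    finally show "fisher_trace d p \<pi> h Y W \<theta>
             \<le> 2 ^ b * (6 * real h + 3 / (2 * p (\<pi> h))) + 3 * real h / (2 * p (\<pi> h))" .
  qed
qed

end
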